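(* For any finite simple graphs $G$ and $H$ without isolated vertices and each of order at least three, $$\gamma_{tR}(G\times H)\ge \max\left\{\frac{\rho_o(H)\gamma_{tR}(G)}{2},\frac{\rho_o(G)\gamma_{tR}(H)}{2}\right\}.$$
   Context: An open packing of $G$ is a set $D$ of vertices with $N(u)\cap N(v)=\emptyset$ for all distinct $u,v\in D$ (open neighborhoods); $\rho_o(G)$ is the maximum size of an open packing. A total Roman dominating function on $G$ is a map $f:V(G)\to\{0,1,2\}$ such that every vertex with label 0 has a neighbor with label 2 and the subgraph induced by vertices with positive labels has no isolated vertices; $\gamma_{tR}(G)$ is the minimum of $\sum_v f(v)$ over such $f$. The direct product $G\times H$ has vertex set $V(G)\times V(H)$, with $(g,h)(g',h')$ an edge iff $gg'\in E(G)$ and $hh'\in E(H)$. *)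

theory Defs
  imports Complex_Main
begin

definition simple_graph :: "'a set \<Rightarrow> ('a \<times> 'a) set \<Rightarrow> bool" where
  "simple_graph V E \<longleftrightarrow> finite V \<and> E \<subseteq> V \<times> V \<and> sym E \<and> irrefl E"

definition nbhd :: "('a \<times> 'a) set \<Rightarrow> 'a \<Rightarrow> 'a set" where
  "nbhd E v = {u. (v, u) \<in> E}"

definition no_isolated :: "'a set \<Rightarrow> ('a \<times> 'a) set \<Rightarrow> bool" where
  "no_isolated V E \<longleftrightarrow> (\<forall>v\<in>V. nbhd E v \<noteq> {})"

definition open_packing :: "'a set \<Rightarrow> ('a \<times> 'a) set \<Rightarrow> 'a set \<Rightarrow> bool" where
  "open_packing V E D \<longleftrightarrow> D \<subseteq> V \<and>
     (\<forall>u\<in>D. \<forall>v\<in>D. u \<noteq> v \<longrightarrow> nbhd E u \<inter> nbhd E v = {})"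

definition open_packing_number :: "'a set \<Rightarrow> ('a \<times> 'a) set \<Rightarrow> nat" where
  "open_packing_number V E = Max {card D | D. open_packing V E D}"

definition trdf :: "'a set \<Rightarrow> ('a \<times> 'a) set \<Rightarrow> ('a \<Rightarrow> nat) \<Rightarrow> bool" where
  "trdf V E f \<longleftrightarrow> (\<forall>v\<in>V. f v \<le> 2)
     \<and> (\<forall>v\<in>V. f v = 0 \<longrightarrow> (\<exists>u\<in>nbhd E v. f u = 2))
     \<and> (\<forall>v\<in>V. f v > 0 \<longrightarrow> (\<exists>u\<in>nbhd E v. u \<in> V \<and> f u > 0))"

definition total_roman_domination_number :: "'a set \<Rightarrow> ('a \<times> 'a) set \<Rightarrow> nat" where
  "total_roman_domination_number V E = Min {(\<Sum>v\<in>V. f v) | f. trdf V E f}"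

definition direct_product_edges ::
  "('a \<times> 'a) set \<Rightarrow> ('b \<times> 'b) set \<Rightarrow> (('a \<times> 'b) \<times> ('a \<times> 'b)) set" where
  "direct_product_edges E F =
     {((g, h), (g', h')) | g h g' h'. (g, g') \<in> E \<and> (h, h') \<in> F}"

end

theory Submission
  imports Defs
begin

lemma trdf_min_le:
  assumes "finite V" "trdf V E f"
  shows "total_roman_domination_number V E \<le> (\<Sum>v\<in>V. f v)"
proof -
  have fin: "finite {(\<Sum>v\<in>V. f v) | f. trdf V E f}"
  proof (rule finite_subset[of _ "{..2 * card V}"])
    show "{(\<Sum>v\<in>V. f v) | f. trdf V E f} \<subseteq> {..2 * card V}"
    proof
      fix s assume "s \<in> {(\<Sum>v\<in>V. f v) | f. trdf V E f}"
      then obtain g where s: "s = (\<Sum>v\<in>V. g v)" and g: "trdf V E g" by blast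
      have "(\<Sum>v\<in>V. g v) \<le> (\<Sum>v\<in>V. 2)"
        by (rule sum_mono) (use g in \<open>auto simp: trdf_def\<close>)
      then show "s \<in> {..2 * card V}" using s by simp
    qed
  qed simp
  show ?thesis unfolding total_roman_domination_number_def
    using assms(2) by (intro Min_le[OF fin]) blast
qed

lemma nbhd_prod: "nbhd (direct_product_edges EG EH) (x, h) =
   {(x', h'). (x, x') \<in> EG \<and> (h, h') \<in> EH}"
  by (auto simp: nbhd_def direct_product_edges_def)

lemma key:
  assumes sG: "simple_graph VG EG" and sH: "simple_graph VH EH"
    and op: "open_packing VH EH D"
    and tf: "trdf (VG \<times> VH) (direct_product_edges EG EH) f"
  shows "card D * total_roman_domination_number VG EG \<le> 2 * (\<Sum>v\<in>VG \<times> VH. f v)"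
proof -
  let ?P = "direct_product_edges EG EH"
  let ?N = "\<lambda>i. insert i (nbhd EH i)"
  define g where "g i x = min 2 (\<Sum>h\<in>?N i. f (x, h))" for i x
  have finG: "finite VG" and EG: "EG \<subseteq> VG \<times> VG" using sG by (auto simp: simple_graph_def)
  have finH: "finite VH" and EH: "EH \<subseteq> VH \<times> VH" using sH by (auto simp: simple_graph_def)
  have DV: "D \<subseteq> VH" and disj: "\<And>u v. u \<in> D \<Longrightarrow> v \<in> D \<Longrightarrow> u \<noteq> v \<Longrightarrow> nbhd EH u \<inter> nbhd EH v = {}"
    using op by (auto simp: open_packing_def)
  have nbH: "nbhd EH i \<subseteq> VH" for i using EH by (auto simp: nbhd_def)
  have finN: "finite (nbhd EH i)" for i using nbH finH finite_subset by metis
  have finD: "finite D" using DV finH finite_subset by metis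
  have t2: "\<And>v. v \<in> VG \<times> VH \<Longrightarrow> f v = 0 \<Longrightarrow> (\<exists>u\<in>nbhd ?P v. f u = 2)"
   and t3: "\<And>v. v \<in> VG \<times> VH \<Longrightarrow> f v > 0 \<Longrightarrow> (\<exists>u\<in>nbhd ?P v. u \<in> VG \<times> VH \<and> f u > 0)"
    using tf by (auto simp: trdf_def)
  have gpos: "g i x' \<ge> min 2 (f (x', h))" if "h \<in> ?N i" for i x' h
  proof -
    have "f (x', h) \<le> (\<Sum>h\<in>?N i. f (x', h))"
      by (rule member_le_sum) (use that finN in auto)
    then show ?thesis unfolding g_def by simp
  qed
  have nb: "\<exists>x'\<in>nbhd EG x. x' \<in> VG \<and> g i x' > 0" if i: "i \<in> D" and x: "x \<in> VG" for i x
  proof (cases "f (x, i) = 0")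
    case True
    then obtain u where u: "u \<in> nbhd ?P (x, i)" "f u = 2" using t2[of "(x,i)"] x subsetD[OF DV i] by auto
    obtain x' h where "u = (x', h)" by (cases u)
    with u have "(x, x') \<in> EG" "(i, h) \<in> EH" "f (x', h) = 2" by (auto simp: nbhd_prod)
    moreover then have "g i x' \<ge> 2" using gpos[of h i x'] by (auto simp: nbhd_def)
    ultimately show ?thesis using EG by (auto simp: nbhd_def)
  next
    case False
    then obtain u where u: "u \<in> nbhd ?P (x, i)" "u \<in> VG \<times> VH" "f u > 0" using t3[of "(x,i)"] x subsetD[OF DV i] by auto
    obtain x' h where "u = (x', h)" by (cases u)
    with u have "(x, x') \<in> EG" "(i, h) \<in> EH" "f (x', h) > 0" by (auto simp: nbhd_prod)
    moreover then have "g i x' > 0" using gpos[of h i x'] by (auto simp: nbhd_def)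
    ultimately show ?thesis using EG by (auto simp: nbhd_def)
  qed
  have trg: "trdf VG EG (g i)" if i: "i \<in> D" for i
    unfolding trdf_def
  proof (intro conjI ballI impI)
    fix x assume "x \<in> VG" then show "g i x \<le> 2" by (simp add: g_def)
  next
    fix x assume x: "x \<in> VG" and "0 < g i x"
    then show "\<exists>u\<in>nbhd EG x. u \<in> VG \<and> 0 < g i u" using nb[OF i x] by blast
  next
    fix x assume x: "x \<in> VG" and g0: "g i x = 0"
    then have "(\<Sum>h\<in>?N i. f (x, h)) = 0" by (simp add: g_def)
    then have "f (x, i) = 0" using finN by simp
    then obtain u where u: "u \<in> nbhd ?P (x, i)" "f u = 2" using t2[of "(x,i)"] x subsetD[OF DV i] by auto
    obtain x' h where "u = (x', h)" by (cases u)
    with u have "(x, x') \<in> EG" "(i, h) \<in> EH" "f (x', h) = 2" by (auto simp: nbhd_prod)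
    moreover then have "g i x' \<ge> 2" using gpos[of h i x'] by (auto simp: nbhd_def)
    moreover have "g i x' \<le> 2" by (simp add: g_def)
    ultimately show "\<exists>u\<in>nbhd EG x. g i u = 2" by (auto simp: nbhd_def)
  qed
  have "card D * total_roman_domination_number VG EG = (\<Sum>i\<in>D. total_roman_domination_number VG EG)"
    by simp
  also have "\<dots> \<le> (\<Sum>i\<in>D. \<Sum>x\<in>VG. g i x)"
    by (rule sum_mono) (use trdf_min_le[OF finG trg] in auto)
  also have "\<dots> \<le> (\<Sum>i\<in>D. \<Sum>x\<in>VG. \<Sum>h\<in>?N i. f (x, h))"
    by (intro sum_mono) (simp add: g_def)
  also have "\<dots> = (\<Sum>x\<in>VG. \<Sum>i\<in>D. \<Sum>h\<in>?N i. f (x, h))"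
    by (rule sum.swap)
  also have "\<dots> \<le> (\<Sum>x\<in>VG. 2 * (\<Sum>h\<in>VH. f (x, h)))"
  proof (rule sum_mono)
    fix x assume x: "x \<in> VG"
    have "(\<Sum>i\<in>D. \<Sum>h\<in>?N i. f (x, h)) \<le> (\<Sum>i\<in>D. f (x, i) + (\<Sum>h\<in>nbhd EH i. f (x, h)))"
      by (rule sum_mono) (simp add: sum.insert_if finN)
    also have "\<dots> = (\<Sum>i\<in>D. f (x, i)) + (\<Sum>i\<in>D. \<Sum>h\<in>nbhd EH i. f (x, h))"
      by (rule sum.distrib)
    also have "(\<Sum>i\<in>D. \<Sum>h\<in>nbhd EH i. f (x, h)) = (\<Sum>h\<in>(\<Union>i\<in>D. nbhd EH i). f (x, h))"
      by (rule sum.UNION_disjoint[symmetric]) (use finD finN disj in auto)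
    also have "(\<Sum>h\<in>(\<Union>i\<in>D. nbhd EH i). f (x, h)) \<le> (\<Sum>h\<in>VH. f (x, h))"
      by (rule sum_mono2) (use finH nbH in auto)
    also have "(\<Sum>i\<in>D. f (x, i)) \<le> (\<Sum>h\<in>VH. f (x, h))"
      by (rule sum_mono2) (use finH DV in auto)
    finally show "(\<Sum>i\<in>D. \<Sum>h\<in>?N i. f (x, h)) \<le> 2 * (\<Sum>h\<in>VH. f (x, h))" by simp
  qed
  also have "\<dots> = 2 * (\<Sum>v\<in>VG \<times> VH. f v)"
    by (simp add: sum_distrib_left[symmetric] sum.cartesian_product)
  finally show ?thesis .
qed

lemma trdf_swap:
  assumes "trdf (VG \<times> VH) (direct_product_edges EG EH) f"
  shows "trdf (VH \<times> VG) (direct_product_edges EH EG) (f \<circ> prod.swap)"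
  using assms unfolding trdf_def
  apply (intro conjI ballI impI)
    apply (auto simp: nbhd_def direct_product_edges_def)
   apply fastforce+
  done

lemma exists_trdf:
  assumes sG: "simple_graph VG EG" and sH: "simple_graph VH EH"
    and "no_isolated VG EG" and "no_isolated VH EH"
  shows "\<exists>f. trdf (VG \<times> VH) (direct_product_edges EG EH) f"
proof -
  have EG: "EG \<subseteq> VG \<times> VG" and EH: "EH \<subseteq> VH \<times> VH"
    using sG sH by (auto simp: simple_graph_def)
  have "trdf (VG \<times> VH) (direct_product_edges EG EH) (\<lambda>_. 2)"
    unfolding trdf_def
  proof (intro conjI ballI impI)
    fix v assume v: "v \<in> VG \<times> VH"
    obtain x h where vx: "v = (x, h)" by (cases v)
    obtain x' where "(x, x') \<in> EG" using assms(3) v vx by (auto simp: no_isolated_def nbhd_def)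
    moreover obtain h' where "(h, h') \<in> EH" using assms(4) v vx by (auto simp: no_isolated_def nbhd_def)
    ultimately show "\<exists>u\<in>nbhd (direct_product_edges EG EH) v. u \<in> VG \<times> VH \<and> 0 < (2::nat)"
      using vx EG EH by (intro bexI[of _ "(x', h')"]) (auto simp: nbhd_prod)
  qed auto
  then show ?thesis by blast
qed

lemma min_attained:
  assumes "finite V" "\<exists>f. trdf V E f"
  shows "\<exists>f. trdf V E f \<and> total_roman_domination_number V E = (\<Sum>v\<in>V. f v)"
proof -
  have fin: "finite {(\<Sum>v\<in>V. f v) | f. trdf V E f}"
  proof (rule finite_subset[of _ "{..2 * card V}"])
    show "{(\<Sum>v\<in>V. f v) | f. trdf V E f} \<subseteq> {..2 * card V}"
    proof
      fix s assume "s \<in> {(\<Sum>v\<in>V. f v) | f. trdf V E f}"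
      then obtain g where s: "s = (\<Sum>v\<in>V. g v)" and g: "trdf V E g" by blast
      have "(\<Sum>v\<in>V. g v) \<le> (\<Sum>v\<in>V. 2)"
        by (rule sum_mono) (use g in \<open>auto simp: trdf_def\<close>)
      then show "s \<in> {..2 * card V}" using s by simp
    qed
  qed simp
  have ne: "{(\<Sum>v\<in>V. f v) | f. trdf V E f} \<noteq> {}" using assms(2) by blast
  have "Min {(\<Sum>v\<in>V. f v) | f. trdf V E f} \<in> {(\<Sum>v\<in>V. f v) | f. trdf V E f}"
    by (rule Min_in[OF fin ne])
  then show ?thesis unfolding total_roman_domination_number_def by blast
qed

lemma packing_attained:
  assumes "finite V"
  shows "\<exists>D. open_packing V E D \<and> open_packing_number V E = card D"
proof -
  have fin: "finite {card D | D. open_packing V E D}"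
    by (rule finite_subset[of _ "{..card V}"])
       (use assms in \<open>auto simp: open_packing_def intro: card_mono\<close>)
  have ne: "{card D | D. open_packing V E D} \<noteq> {}"
    by (auto simp: open_packing_def)
  have "Max {card D | D. open_packing V E D} \<in> {card D | D. open_packing V E D}"
    by (rule Max_in[OF fin ne])
  then show ?thesis unfolding open_packing_number_def by blast
qed

theorem theorem2p8:
  fixes VG :: "'a set" and EG :: "('a \<times> 'a) set"
    and VH :: "'b set" and EH :: "('b \<times> 'b) set"
  assumes "simple_graph VG EG" and "simple_graph VH EH"
    and "no_isolated VG EG" and "no_isolated VH EH"
    and "card VG \<ge> 3" and "card VH \<ge> 3"
  shows "real (total_roman_domination_number (VG \<times> VH) (direct_product_edges EG EH))
     \<ge> max (real (open_packing_number VH EH) * real (total_roman_domination_number VG EG) / 2)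
             (real (open_packing_number VG EG) * real (total_roman_domination_number VH EH) / 2)"
proof -
  have finG: "finite VG" and finH: "finite VH" using assms(1,2) by (auto simp: simple_graph_def)
  obtain f where f: "trdf (VG \<times> VH) (direct_product_edges EG EH) f"
    and fe: "total_roman_domination_number (VG \<times> VH) (direct_product_edges EG EH) = (\<Sum>v\<in>VG \<times> VH. f v)"
    using min_attained[OF _ exists_trdf[OF assms(1-4)]] finG finH by blast
  obtain D where D: "open_packing VH EH D" "open_packing_number VH EH = card D"
    using packing_attained[OF finH] by blast
  obtain D' where D': "open_packing VG EG D'" "open_packing_number VG EG = card D'"
    using packing_attained[OF finG] by blast
  have 1: "open_packing_number VH EH * total_roman_domination_number VG EG
      \<le> 2 * total_roman_domination_number (VG \<times> VH) (direct_product_edges EG EH)"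
    using key[OF assms(1,2) D(1) f] D(2) fe by simp
  have sw: "(\<Sum>v\<in>VH \<times> VG. (f \<circ> prod.swap) v) = (\<Sum>v\<in>VG \<times> VH. f v)"
  proof -
    have "(\<Sum>v\<in>VH \<times> VG. (f \<circ> prod.swap) v) = (\<Sum>v\<in>prod.swap ` (VH \<times> VG). f v)"
      by (rule sum.reindex[symmetric]) (simp add: inj_on_def)
    also have "prod.swap ` (VH \<times> VG) = VG \<times> VH" by auto
    finally show ?thesis .
  qed
  have 2: "open_packing_number VG EG * total_roman_domination_number VH EH
      \<le> 2 * total_roman_domination_number (VG \<times> VH) (direct_product_edges EG EH)"
    using key[OF assms(2,1) D'(1) trdf_swap[OF f]] D'(2) fe sw by simp
  have r1: "real (open_packing_number VH EH) * real (total_roman_domination_number VG EG)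
      \<le> 2 * real (total_roman_domination_number (VG \<times> VH) (direct_product_edges EG EH))"
    using 1 by (metis of_nat_le_iff of_nat_mult of_nat_numeral)
  have r2: "real (open_packing_number VG EG) * real (total_roman_domination_number VH EH)
      \<le> 2 * real (total_roman_domination_number (VG \<times> VH) (direct_product_edges EG EH))"
    using 2 by (metis of_nat_le_iff of_nat_mult of_nat_numeral)
  show ?thesis using r1 r2 by simp
qed

end
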